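(* Let $\mathcal L_{\mathcal N}=(\mathcal L,[\cdot_\lambda\cdot]_{\mathcal L},\mathcal N)$ and $\mathcal H_{\mathcal Q}=(\mathcal H,[\cdot_\lambda\cdot]_{\mathcal H},\mathcal Q)$ be Nijenhuis Lie conformal algebras, let $0\to\mathcal H_{\mathcal Q}\xrightarrow{inc}\mathcal E_{\mathcal R}\xrightarrow{proj}\mathcal L_{\mathcal N}\to0$ be a non-abelian extension with section $s$, and let $(\chi_\lambda,\rho,\Phi)$ be the non-abelian $2$-cocycle induced by $s$. A pair $(\alpha,\beta)\in\mathrm{Aut}(\mathcal H_{\mathcal Q})\times\mathrm{Aut}(\mathcal L_{\mathcal N})$ is inducible if and only if the non-abelian $2$-cocycles $(\chi_\lambda,\rho,\Phi)$ and $(\chi^{(\alpha,\beta)}_\lambda,\rho^{(\alpha,\beta)},\Phi^{(\alpha,\beta)})$ are equivalent; in other words, if and only if the Wells map vanishes at $(\alpha,\beta)$.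
   Context: All spaces over $\mathbb C$. A Lie conformal algebra is a $\mathbb C[\partial]$-module with a $\mathbb C$-bilinear $\lambda$-bracket satisfying $[\partial a_\lambda b]=-\lambda[a_\lambda b]$, $[a_\lambda\partial b]=(\partial+\lambda)[a_\lambda b]$, $[a_\lambda b]=-[b_{-\partial-\lambda}a]$, $[a_\lambda[b_\mu c]]=[[a_\lambda b]_{\lambda+\mu}c]+[b_\mu[a_\lambda c]]$. A Nijenhuis operator is a $\mathbb C[\partial]$-linear $\mathcal N$ with $[\mathcal N(p)_\lambda\mathcal N(q)]=\mathcal N([\mathcal N(p)_\lambda q]+[p_\lambda\mathcal N(q)]-\mathcal N([p_\lambda q]))$; a Nijenhuis Lie conformal algebra is a Lie conformal algebra with a Nijenhuis operator; morphisms are bracket-preserving $\mathbb C[\partial]$-linear maps intertwining the operators; $\mathrm{Aut}$ denotes bijective self-morphisms. A non-abelian extension: a Nijenhuis Lie conformal algebra $\mathcal E_{\mathcal R}=(\mathcal E,[\cdot_\lambda\cdot]_{\mathcal E},\mathcal R)$ with a short exact sequence of morphisms as displayed, split as $\mathbb C[\partial]$-modules; $\mathcal H\subset\mathcal E$, $\mathcal R|_{\mathcal H}=\mathcal Q$. A section is a $\mathbb C[\partial]$-linear $s$ with $proj\circ s=\mathrm{id}$; it induces $\chi_\lambda(p,q)=[s(p)_\lambda s(q)]_{\mathcal E}-s([p_\lambda q]_{\mathcal L})$, $\rho(p)_\lambda h=[s(p)_\lambda h]_{\mathcal E}$, $\Phi(p)=\mathcal R(s(p))-s(\mathcal N(p))$.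 A non-abelian $2$-cocycle is a triple $(\chi_\lambda:\mathcal L\otimes\mathcal L\to\mathcal H[\lambda],\ \rho:\mathcal L\otimes\mathcal H\to\mathcal H[\lambda],\ \Phi:\mathcal L\to\mathcal H)$ satisfying, for $p,q,r\in\mathcal L$, $h\in\mathcal H$: (i) $\rho(p)_\lambda\rho(q)_\mu h-\rho(q)_\mu\rho(p)_\lambda h-\rho([p_\lambda q]_{\mathcal L})_{\lambda+\mu}h=[\chi_\lambda(p,q)_{\lambda+\mu}h]_{\mathcal H}$; (ii) $\rho(p)_\lambda\chi_\mu(q,r)+\rho(q)_\mu\chi_\lambda(r,p)+\rho(r)_{-\partial-\lambda-\mu}\chi_\lambda(p,q)-\chi_{\lambda+\mu}([q_\mu r]_{\mathcal L},p)-\chi_{\lambda+\mu}([r_{-\partial-\lambda}p]_{\mathcal L},q)-\chi_{\lambda+\mu}([p_\lambda q]_{\mathcal L},r)=0$; (iii) $\rho(\mathcal Np)_\lambda\mathcal Q(h)=\mathcal Q(\rho(\mathcal Np)_\lambda h+\rho(p)_\lambda\mathcal Q(h)-\mathcal Q(\rho(p)_\lambda h))+\mathcal Q([\Phi(p)_\lambda h]_{\mathcal H})-[\Phi(p)_\lambda\mathcal Q(h)]_{\mathcal H}$; (iv) $\chi_\lambda(\mathcal Np,\mathcal Nq)-\mathcal Q(\chi_\lambda(\mathcal Np,q)+\chi_\lambda(p,\mathcal Nq)-\mathcal Q\chi_\lambda(p,q))-\Phi([\mathcal N(p)_\lambda q]_{\mathcal L}+[p_\lambda\mathcal N(q)]_{\mathcal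 L}-\mathcal N[p_\lambda q]_{\mathcal L})+\rho(\mathcal Np)_\lambda\Phi(q)-\rho(\mathcal Nq)_{-\partial-\lambda}\Phi(p)+\mathcal Q(\rho(q)_{-\partial-\lambda}\Phi(p)-\rho(p)_\lambda\Phi(q)+\Phi([p_\lambda q]_{\mathcal L}))+[\Phi(p)_\lambda\Phi(q)]_{\mathcal H}=0$. Two such triples $(\chi,\rho,\Phi),(\chi',\rho',\Phi')$ are equivalent if there is a linear $\tau:\mathcal L\to\mathcal H$ with $\rho(p)_\lambda h-\rho'(p)_\lambda h=[\tau(p)_\lambda h]_{\mathcal H}$, $\chi_\lambda(p,q)-\chi'_\lambda(p,q)=[\tau(p)_\lambda\tau(q)]_{\mathcal H}-\tau([p_\lambda q]_{\mathcal L})+\rho'(p)_\lambda\tau(q)-\rho'(q)_{-\partial-\lambda}\tau(p)$, $\Phi(p)-\Phi'(p)=\mathcal Q\tau(p)-\tau\mathcal N(p)$; $H^2_{nab}(\mathcal L_{\mathcal N},\mathcal H_{\mathcal Q})$ is the set of equivalence classes. The twisted triple is $\chi^{(\alpha,\beta)}_\lambda(p,q)=\alpha\chi_\lambda(\beta^{-1}p,\beta^{-1}q)$, $\rho^{(\alpha,\beta)}(p)_\lambda h=\alpha(\rho(\beta^{-1}p)_\lambda\alpha^{-1}h)$, $\Phi^{(\alpha,\beta)}(p)=\alpha\Phi(\beta^{-1}p)$. The Wells map $\mathfrak W:\mathrm{Aut}(\mathcal H_{\mathcal Q})\times\mathrm{Aut}(\mathcal L_{\mathcal N})\to H^2_{nab}(\mathcal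 L_{\mathcal N},\mathcal H_{\mathcal Q})$ is $\mathfrak W(\alpha,\beta)=[(\chi^{(\alpha,\beta)}_\lambda,\rho^{(\alpha,\beta)},\Phi^{(\alpha,\beta)})-(\chi_\lambda,\rho,\Phi)]$; "$\mathfrak W$ vanishes at $(\alpha,\beta)$" means this class is trivial. Let $\mathrm{Aut}_{\mathcal H}(\mathcal E_{\mathcal R})=\{\gamma\in\mathrm{Aut}(\mathcal E_{\mathcal R}):\gamma(\mathcal H)=\mathcal H\}$ and $\Pi(\gamma)=(\gamma|_{\mathcal H},proj\circ\gamma\circ s)$; $(\alpha,\beta)$ is inducible if it lies in the image of $\Pi$. *)

theory Defs
  imports Complex_Main
begin

text \<open>A Nijenhuis Lie conformal algebra on an additive group type 'a:
  complex scalar multiplication, the operator partial, the lambda-bracket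
  (given by its coefficients: lb a b n is the coefficient of lambda^n in [a_lambda b]),
  and the Nijenhuis operator.\<close>

record 'a ncla =
  sc  :: "complex \<Rightarrow> 'a \<Rightarrow> 'a"
  dd  :: "'a \<Rightarrow> 'a"
  lb  :: "'a \<Rightarrow> 'a \<Rightarrow> nat \<Rightarrow> 'a"
  nop :: "'a \<Rightarrow> 'a"

definition cdmodule :: "'a::ab_group_add ncla \<Rightarrow> bool" where
  "cdmodule A \<longleftrightarrow> module (sc A)
     \<and> (\<forall>x y. dd A (x + y) = dd A x + dd A y)
     \<and> (\<forall>c x. dd A (sc A c x) = sc A c (dd A x))"

definition cdlin :: "'a::ab_group_add ncla \<Rightarrow> 'b::ab_group_add ncla \<Rightarrow> ('a \<Rightarrow> 'b) \<Rightarrow> bool" where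
  "cdlin A B f \<longleftrightarrow> (\<forall>x y. f (x + y) = f x + f y)
     \<and> (\<forall>c x. f (sc A c x) = sc B c (f x))
     \<and> (\<forall>x. f (dd A x) = dd B (f x))"

text \<open>Given a polynomial in mu (coefficient function f, finitely supported), the
  coefficient of lambda^k of the polynomial obtained by substituting mu := -partial-lambda,
  using (-partial-lambda)^m = (-1)^m sum_k (m choose k) lambda^k partial^(m-k).\<close>
definition subst_mdl :: "'a::ab_group_add ncla \<Rightarrow> (nat \<Rightarrow> 'a) \<Rightarrow> nat \<Rightarrow> 'a" where
  "subst_mdl A f k =
     (\<Sum>m\<in>{m. f m \<noteq> 0}. sc A ((-1) ^ m * of_nat (m choose k)) ((dd A ^^ (m - k)) (f m)))"

definition LCA :: "'a::ab_group_add ncla \<Rightarrow> bool" where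
  "LCA A \<longleftrightarrow> cdmodule A
   \<and> (\<forall>a b. finite {n. lb A a b n \<noteq> 0})
   \<and> (\<forall>a b c n. lb A (a + b) c n = lb A a c n + lb A b c n)
   \<and> (\<forall>a b c n. lb A a (b + c) n = lb A a b n + lb A a c n)
   \<and> (\<forall>k a b n. lb A (sc A k a) b n = sc A k (lb A a b n))
   \<and> (\<forall>k a b n. lb A a (sc A k b) n = sc A k (lb A a b n))
   \<comment> \<open>[partial a_lambda b] = -lambda [a_lambda b]\<close>
   \<and> (\<forall>a b n. lb A (dd A a) b n = - (if n = 0 then 0 else lb A a b (n - 1)))
   \<comment> \<open>[a_lambda partial b] = (partial + lambda) [a_lambda b]\<close>
   \<and> (\<forall>a b n. lb A a (dd A b) n = dd A (lb A a b n) + (if n = 0 then 0 else lb A a b (n - 1)))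
   \<comment> \<open>[a_lambda b] = - [b_(-partial-lambda) a]\<close>
   \<and> (\<forall>a b n. lb A a b n = - subst_mdl A (lb A b a) n)
   \<comment> \<open>Jacobi identity, coefficient of lambda^i mu^j\<close>
   \<and> (\<forall>a b c i j. lb A a (lb A b c j) i =
        (\<Sum>l\<le>i. sc A (of_nat ((j + l) choose l)) (lb A (lb A a b (i - l)) c (j + l)))
        + lb A b (lb A a c i) j)"

definition NLCA :: "'a::ab_group_add ncla \<Rightarrow> bool" where
  "NLCA A \<longleftrightarrow> LCA A \<and> cdlin A A (nop A)
   \<and> (\<forall>p q n. lb A (nop A p) (nop A q) n =
        nop A (lb A (nop A p) q n + lb A p (nop A q) n - nop A (lb A p q n)))"

definition morph :: "'a::ab_group_add ncla \<Rightarrow> 'b::ab_group_add ncla \<Rightarrow> ('a \<Rightarrow> 'b) \<Rightarrow> bool" where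
  "morph A B f \<longleftrightarrow> cdlin A B f
   \<and> (\<forall>a b n. lb B (f a) (f b) n = f (lb A a b n))
   \<and> (\<forall>a. f (nop A a) = nop B (f a))"

definition Aut :: "'a::ab_group_add ncla \<Rightarrow> ('a \<Rightarrow> 'a) set" where
  "Aut A = {f. morph A A f \<and> bij f}"

definition nab_ext :: "'h::ab_group_add ncla \<Rightarrow> 'e::ab_group_add ncla \<Rightarrow> 'l::ab_group_add ncla
    \<Rightarrow> ('h \<Rightarrow> 'e) \<Rightarrow> ('e \<Rightarrow> 'l) \<Rightarrow> bool" where
  "nab_ext H E L inc proj \<longleftrightarrow> NLCA H \<and> NLCA E \<and> NLCA L
   \<and> morph H E inc \<and> morph E L proj \<and> inj inc \<and> surj proj
   \<and> range inc = {e. proj e = 0}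
   \<and> (\<exists>s. cdlin L E s \<and> (\<forall>p. proj (s p) = p))"

definition is_section :: "'l::ab_group_add ncla \<Rightarrow> 'e::ab_group_add ncla \<Rightarrow> ('e \<Rightarrow> 'l)
    \<Rightarrow> ('l \<Rightarrow> 'e) \<Rightarrow> bool" where
  "is_section L E proj s \<longleftrightarrow> cdlin L E s \<and> (\<forall>p. proj (s p) = p)"

definition induced_cocycle :: "'l::ab_group_add ncla \<Rightarrow> 'e::ab_group_add ncla \<Rightarrow> ('h::ab_group_add \<Rightarrow> 'e)
    \<Rightarrow> ('l \<Rightarrow> 'e) \<Rightarrow> ('l \<Rightarrow> 'l \<Rightarrow> nat \<Rightarrow> 'h) \<Rightarrow> ('l \<Rightarrow> 'h \<Rightarrow> nat \<Rightarrow> 'h) \<Rightarrow> ('l \<Rightarrow> 'h) \<Rightarrow> bool" where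
  "induced_cocycle L E inc s chi rho Phi \<longleftrightarrow>
     (\<forall>p q n. inc (chi p q n) = lb E (s p) (s q) n - s (lb L p q n))
   \<and> (\<forall>p h n. inc (rho p h n) = lb E (s p) (inc h) n)
   \<and> (\<forall>p. inc (Phi p) = nop E (s p) - s (nop L p))"

definition nab_equiv :: "'l::ab_group_add ncla \<Rightarrow> 'h::ab_group_add ncla
    \<Rightarrow> ('l \<Rightarrow> 'l \<Rightarrow> nat \<Rightarrow> 'h) \<times> ('l \<Rightarrow> 'h \<Rightarrow> nat \<Rightarrow> 'h) \<times> ('l \<Rightarrow> 'h)
    \<Rightarrow> ('l \<Rightarrow> 'l \<Rightarrow> nat \<Rightarrow> 'h) \<times> ('l \<Rightarrow> 'h \<Rightarrow> nat \<Rightarrow> 'h) \<times> ('l \<Rightarrow> 'h) \<Rightarrow> bool" where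
  "nab_equiv L H T T' \<longleftrightarrow> (case T of (chi, rho, Phi) \<Rightarrow> case T' of (chi', rho', Phi') \<Rightarrow>
     \<exists>\<tau>. cdlin L H \<tau>
       \<and> (\<forall>p h n. rho p h n - rho' p h n = lb H (\<tau> p) h n)
       \<and> (\<forall>p q n. chi p q n - chi' p q n =
            lb H (\<tau> p) (\<tau> q) n - \<tau> (lb L p q n) + rho' p (\<tau> q) n
            - subst_mdl H (rho' q (\<tau> p)) n)
       \<and> (\<forall>p. Phi p - Phi' p = nop H (\<tau> p) - \<tau> (nop L p)))"

definition tw_chi :: "('h \<Rightarrow> 'h) \<Rightarrow> ('l \<Rightarrow> 'l) \<Rightarrow> ('l \<Rightarrow> 'l \<Rightarrow> nat \<Rightarrow> 'h) \<Rightarrow> 'l \<Rightarrow> 'l \<Rightarrow> nat \<Rightarrow> 'h" where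
  "tw_chi \<alpha> \<beta> chi = (\<lambda>p q n. \<alpha> (chi (inv \<beta> p) (inv \<beta> q) n))"

definition tw_rho :: "('h \<Rightarrow> 'h) \<Rightarrow> ('l \<Rightarrow> 'l) \<Rightarrow> ('l \<Rightarrow> 'h \<Rightarrow> nat \<Rightarrow> 'h) \<Rightarrow> 'l \<Rightarrow> 'h \<Rightarrow> nat \<Rightarrow> 'h" where
  "tw_rho \<alpha> \<beta> rho = (\<lambda>p h n. \<alpha> (rho (inv \<beta> p) (inv \<alpha> h) n))"

definition tw_Phi :: "('h \<Rightarrow> 'h) \<Rightarrow> ('l \<Rightarrow> 'l) \<Rightarrow> ('l \<Rightarrow> 'h) \<Rightarrow> 'l \<Rightarrow> 'h" where
  "tw_Phi \<alpha> \<beta> Phi = (\<lambda>p. \<alpha> (Phi (inv \<beta> p)))"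

definition inducible :: "'e::ab_group_add ncla \<Rightarrow> ('h \<Rightarrow> 'e) \<Rightarrow> ('e \<Rightarrow> 'l) \<Rightarrow> ('l \<Rightarrow> 'e)
    \<Rightarrow> ('h \<Rightarrow> 'h) \<Rightarrow> ('l \<Rightarrow> 'l) \<Rightarrow> bool" where
  "inducible E inc proj s \<alpha> \<beta> \<longleftrightarrow>
     (\<exists>\<gamma>\<in>Aut E. \<gamma> ` range inc = range inc
        \<and> (\<forall>h. \<gamma> (inc h) = inc (\<alpha> h))
        \<and> (\<forall>p. proj (\<gamma> (s p)) = \<beta> p))"

end

theory Submission
  imports Defs
begin

lemma add_hom:
  fixes f :: "'a::ab_group_add \<Rightarrow> 'b::ab_group_add"
  assumes "\<And>x y. f (x + y) = f x + f y"
  shows "f 0 = 0" "f (- x) = - f x" "f (x - y) = f x - f y"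
proof -
  interpret additive f using assms by (simp add: additive_def)
  show "f 0 = 0" by (rule zero)
  show "f (- x) = - f x" by (rule minus)
  show "f (x - y) = f x - f y" by (rule diff)
qed

lemma cdlin_add: "cdlin A B f \<Longrightarrow> f (x + y) = f x + f y"
  by (simp add: cdlin_def)
lemma cdlin_sc: "cdlin A B f \<Longrightarrow> f (sc A c x) = sc B c (f x)"
  by (simp add: cdlin_def)
lemma cdlin_dd: "cdlin A B f \<Longrightarrow> f (dd A x) = dd B (f x)"
  by (simp add: cdlin_def)
lemma cdlin_0: "cdlin A B f \<Longrightarrow> f 0 = 0"
  by (rule add_hom(1)) (simp add: cdlin_def)
lemma cdlin_minus: "cdlin A B f \<Longrightarrow> f (- x) = - f x"
  by (rule add_hom(2)) (simp add: cdlin_def)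
lemma cdlin_diff: "cdlin A B f \<Longrightarrow> f (x - y) = f x - f y"
  by (rule add_hom(3)) (simp add: cdlin_def)

lemma cdlin_ddpow: "cdlin A B f \<Longrightarrow> f ((dd A ^^ k) x) = (dd B ^^ k) (f x)"
  by (induction k) (simp_all add: cdlin_dd)

lemma subst_mdl_map:
  assumes f: "cdlin A B f" and i: "inj f"
  shows "subst_mdl B (\<lambda>m. f (g m)) n = f (subst_mdl A g n)"
proof -
  have f0: "f 0 = 0" using f by (rule cdlin_0)
  have S: "{m. f (g m) \<noteq> 0} = {m. g m \<noteq> 0}"
    using i f0 by (metis injD)
  have "f (subst_mdl A g n) =
     (\<Sum>m\<in>{m. g m \<noteq> 0}. f (sc A ((-1) ^ m * of_nat (m choose n)) ((dd A ^^ (m - n)) (g m))))"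
    unfolding subst_mdl_def
    using sum_comp_morphism[of f, symmetric] f0 cdlin_add[OF f] by (simp add: comp_def)
  also have "\<dots> = subst_mdl B (\<lambda>m. f (g m)) n"
    unfolding subst_mdl_def S by (simp add: cdlin_sc[OF f] cdlin_ddpow[OF f])
  finally show ?thesis by simp
qed

lemma module_diff: "cdmodule A \<Longrightarrow> sc A c (x - y) = sc A c x - sc A c y"
  unfolding cdmodule_def by (simp add: module.scale_right_diff_distrib)


locale ctx =
  fixes HQ :: "'h::ab_group_add ncla" and ER :: "'e::ab_group_add ncla"
    and LN :: "'l::ab_group_add ncla"
    and inc :: "'h \<Rightarrow> 'e" and proj :: "'e \<Rightarrow> 'l" and s :: "'l \<Rightarrow> 'e"
    and chi :: "'l \<Rightarrow> 'l \<Rightarrow> nat \<Rightarrow> 'h" and rho :: "'l \<Rightarrow> 'h \<Rightarrow> nat \<Rightarrow> 'h"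
    and Phi :: "'l \<Rightarrow> 'h"
    and \<alpha> :: "'h \<Rightarrow> 'h" and \<beta> :: "'l \<Rightarrow> 'l"
  assumes ext: "nab_ext HQ ER LN inc proj"
    and sec: "is_section LN ER proj s"
    and coc: "induced_cocycle LN ER inc s chi rho Phi"
    and aA: "\<alpha> \<in> Aut HQ" and bA: "\<beta> \<in> Aut LN"
begin

lemma NH: "NLCA HQ" and NE: "NLCA ER" and NL: "NLCA LN"
  and inc_m: "morph HQ ER inc" and proj_m: "morph ER LN proj" and inc_inj: "inj inc"
  and kern: "range inc = {e. proj e = 0}"
  using ext by (auto simp: nab_ext_def)

lemma LE: "LCA ER" and LH: "LCA HQ" and LL: "LCA LN" using NH NE NL by (auto simp: NLCA_def)

lemma modE: "cdmodule ER" and modH: "cdmodule HQ" and modL: "cdmodule LN"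
  using LE LH LL by (auto simp: LCA_def)

lemma inc_l: "cdlin HQ ER inc" and proj_l: "cdlin ER LN proj" and s_l: "cdlin LN ER s"
  and a_l: "cdlin HQ HQ \<alpha>" and b_l: "cdlin LN LN \<beta>"
  and nopE_l: "cdlin ER ER (nop ER)" and nopH_l: "cdlin HQ HQ (nop HQ)" and nopL_l: "cdlin LN LN (nop LN)"
  using inc_m proj_m sec aA bA NE NH NL by (auto simp: morph_def is_section_def Aut_def NLCA_def)

lemma ps[simp]: "proj (s p) = p" using sec by (simp add: is_section_def)

lemma inc_lb[simp]: "lb ER (inc a) (inc b) n = inc (lb HQ a b n)"
  and inc_nop: "inc (nop HQ a) = nop ER (inc a)"
  and proj_lb: "lb LN (proj a') (proj b') n = proj (lb ER a' b' n)"
  and proj_nop: "proj (nop ER a') = nop LN (proj a')"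
  using inc_m proj_m by (auto simp: morph_def)

lemma a_lb: "lb HQ (\<alpha> a) (\<alpha> b) n = \<alpha> (lb HQ a b n)" and a_nop: "\<alpha> (nop HQ a) = nop HQ (\<alpha> a)"
  and b_lb: "lb LN (\<beta> p) (\<beta> q) n = \<beta> (lb LN p q n)" and b_nop: "\<beta> (nop LN p) = nop LN (\<beta> p)"
  and a_bij: "bij \<alpha>" and b_bij: "bij \<beta>"
  using aA bA by (auto simp: Aut_def morph_def)

lemma proj_inc[simp]: "proj (inc h) = 0" using kern by auto

lemma a_inv[simp]: "\<alpha> (inv \<alpha> h) = h" "inv \<alpha> (\<alpha> h) = h"
  using a_bij by (auto simp: bij_def surj_f_inv_f)
lemma b_inv[simp]: "\<beta> (inv \<beta> h) = h" "inv \<beta> (\<beta> h) = h"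
  using b_bij by (auto simp: bij_def surj_f_inv_f)

lemma ib_l: "cdlin LN LN (inv \<beta>)"
  unfolding cdlin_def
proof (intro conjI allI)
  fix x y c
  show "inv \<beta> (x + y) = inv \<beta> x + inv \<beta> y"
    by (metis b_inv cdlin_add[OF b_l])
  show "inv \<beta> (sc LN c x) = sc LN c (inv \<beta> x)"
    by (metis b_inv cdlin_sc[OF b_l])
  show "inv \<beta> (dd LN x) = dd LN (inv \<beta> x)"
    by (metis b_inv cdlin_dd[OF b_l])
qed

lemma ib_lb: "inv \<beta> (lb LN p q n) = lb LN (inv \<beta> p) (inv \<beta> q) n"
  by (metis b_inv b_lb)
lemma ib_nop: "inv \<beta> (nop LN p) = nop LN (inv \<beta> p)"
  by (metis b_inv b_nop)

lemma chi_d: "inc (chi p q n) = lb ER (s p) (s q) n - s (lb LN p q n)"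
  and rho_d: "inc (rho p h n) = lb ER (s p) (inc h) n"
  and Phi_d: "inc (Phi p) = nop ER (s p) - s (nop LN p)"
  using coc by (auto simp: induced_cocycle_def)

lemma lbE_addL: "lb ER (a + b) c n = lb ER a c n + lb ER b c n"
  and lbE_addR: "lb ER a (b + c) n = lb ER a b n + lb ER a c n"
  and skewE: "lb ER a b n = - subst_mdl ER (lb ER b a) n"
  using LE by (auto simp: LCA_def)

lemma lbE_diffL: "lb ER (a - b) c n = lb ER a c n - lb ER b c n"
  by (rule add_hom(3)[where f="\<lambda>a. lb ER a c n"]) (rule lbE_addL)
lemma lbE_diffR: "lb ER c (a - b) n = lb ER c a n - lb ER c b n"
  by (rule add_hom(3)[where f="\<lambda>a. lb ER c a n"]) (rule lbE_addR)

lemma ddE_diff: "dd ER (x - y) = dd ER x - dd ER y"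
  by (rule add_hom(3)) (use modE in \<open>simp add: cdmodule_def\<close>)

lemma inc_eqI: "inc x = inc y \<Longrightarrow> x = y" using inc_inj by (meson injD)

lemma lb_inc_s: "lb ER (inc h) (s q) n = - inc (subst_mdl HQ (rho q h) n)"
proof -
  have "lb ER (inc h) (s q) n = - subst_mdl ER (\<lambda>m. inc (rho q h m)) n"
    by (subst skewE) (simp add: rho_d)
  also have "\<dots> = - inc (subst_mdl HQ (rho q h) n)"
    by (simp add: subst_mdl_map[OF inc_l inc_inj])
  finally show ?thesis .
qed


lemma forward:
  assumes "inducible ER inc proj s \<alpha> \<beta>"
  shows "nab_equiv LN HQ (tw_chi \<alpha> \<beta> chi, tw_rho \<alpha> \<beta> rho, tw_Phi \<alpha> \<beta> Phi) (chi, rho, Phi)"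
proof -
  obtain \<gamma> where gA: "\<gamma> \<in> Aut ER" and gi: "\<And>h. \<gamma> (inc h) = inc (\<alpha> h)"
    and gp: "\<And>p. proj (\<gamma> (s p)) = \<beta> p"
    using assms unfolding inducible_def by blast
  have g_l: "cdlin ER ER \<gamma>" and g_lb: "\<And>a b n. lb ER (\<gamma> a) (\<gamma> b) n = \<gamma> (lb ER a b n)"
    and g_nop: "\<And>a. \<gamma> (nop ER a) = nop ER (\<gamma> a)"
    using gA by (auto simp: Aut_def morph_def)
  define G where "G p = \<gamma> (s (inv \<beta> p))" for p
  have "G p - s p \<in> range inc" for p
    using kern gp unfolding G_def by (simp add: cdlin_diff[OF proj_l])
  then have tau: "inc (\<tau> p) = G p - s p" if "\<tau> = (\<lambda>p. inv inc (G p - s p))" for p \<tau>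
    using that by (simp add: f_inv_into_f)
  define \<tau> where "\<tau> = (\<lambda>p. inv inc (G p - s p))"
  note tau = tau[OF \<tau>_def]
  have Gt: "G p = s p + inc (\<tau> p)" for p using tau[of p] by simp
  have t_l: "cdlin LN HQ \<tau>"
    unfolding cdlin_def
  proof (intro conjI allI)
    fix x y c
    show "\<tau> (x + y) = \<tau> x + \<tau> y"
      by (rule inc_eqI) (simp add: tau G_def cdlin_add[OF inc_l] cdlin_add[OF ib_l]
          cdlin_add[OF s_l] cdlin_add[OF g_l])
    show "\<tau> (sc LN c x) = sc HQ c (\<tau> x)"
      by (rule inc_eqI) (simp add: tau G_def cdlin_sc[OF inc_l] cdlin_sc[OF ib_l]
          cdlin_sc[OF s_l] cdlin_sc[OF g_l] module_diff[OF modE])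
    show "\<tau> (dd LN x) = dd HQ (\<tau> x)"
      by (rule inc_eqI) (simp add: tau G_def cdlin_dd[OF inc_l] cdlin_dd[OF ib_l]
          cdlin_dd[OF s_l] cdlin_dd[OF g_l] ddE_diff)
  qed
  have gi': "\<gamma> (inc h) = inc (\<alpha> h)" for h by (rule gi)
  have R: "tw_rho \<alpha> \<beta> rho p h n - rho p h n = lb HQ (\<tau> p) h n" for p h n
  proof (rule inc_eqI)
    have "inc (tw_rho \<alpha> \<beta> rho p h n) = \<gamma> (inc (rho (inv \<beta> p) (inv \<alpha> h) n))"
      by (simp add: tw_rho_def gi)
    also have "\<dots> = \<gamma> (lb ER (s (inv \<beta> p)) (inc (inv \<alpha> h)) n)"
      by (simp only: rho_d)
    also have "\<dots> = lb ER (G p) (inc h) n"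
      by (simp only: G_def g_lb[symmetric] gi a_inv)
    finally show "inc (tw_rho \<alpha> \<beta> rho p h n - rho p h n) = inc (lb HQ (\<tau> p) h n)"
      by (simp add: cdlin_diff[OF inc_l] rho_d Gt lbE_addL)
  qed
  have C: "tw_chi \<alpha> \<beta> chi p q n - chi p q n =
            lb HQ (\<tau> p) (\<tau> q) n - \<tau> (lb LN p q n) + rho p (\<tau> q) n
            - subst_mdl HQ (rho q (\<tau> p)) n" for p q n
  proof (rule inc_eqI)
    have "inc (tw_chi \<alpha> \<beta> chi p q n) = \<gamma> (inc (chi (inv \<beta> p) (inv \<beta> q) n))"
      by (simp add: tw_chi_def gi)
    also have "\<dots> = lb ER (G p) (G q) n - G (lb LN p q n)"
      by (simp add: chi_d G_def g_lb cdlin_diff[OF g_l] ib_lb)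
    finally show "inc (tw_chi \<alpha> \<beta> chi p q n - chi p q n) = inc (lb HQ (\<tau> p) (\<tau> q) n - \<tau> (lb LN p q n) + rho p (\<tau> q) n
            - subst_mdl HQ (rho q (\<tau> p)) n)"
      by (simp add: cdlin_diff[OF inc_l] cdlin_add[OF inc_l] chi_d Gt lbE_addL lbE_addR
          lb_inc_s rho_d[symmetric] algebra_simps)
  qed
  have P: "tw_Phi \<alpha> \<beta> Phi p - Phi p = nop HQ (\<tau> p) - \<tau> (nop LN p)" for p
  proof (rule inc_eqI)
    have "inc (tw_Phi \<alpha> \<beta> Phi p) = \<gamma> (inc (Phi (inv \<beta> p)))"
      by (simp add: tw_Phi_def gi)
    also have "\<dots> = nop ER (G p) - G (nop LN p)"
      by (simp add: Phi_d G_def g_nop cdlin_diff[OF g_l] ib_nop)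
    finally show "inc (tw_Phi \<alpha> \<beta> Phi p - Phi p) = inc (nop HQ (\<tau> p) - \<tau> (nop LN p))"
      by (simp add: cdlin_diff[OF inc_l] Phi_d Gt cdlin_add[OF nopE_l] inc_nop algebra_simps)
  qed
  show ?thesis unfolding nab_equiv_def using t_l R C P by auto
qed


lemma chi_s: "lb ER (s p) (s q) n = inc (chi p q n) + s (lb LN p q n)"
  by (simp add: chi_d)
lemma Phi_s: "nop ER (s p) = inc (Phi p) + s (nop LN p)"
  by (simp add: Phi_d)

lemma a_inj: "inj \<alpha>" using a_bij by (simp add: bij_def)
lemma b_inj: "inj \<beta>" using b_bij by (simp add: bij_def)

lemma lb_sum: "lb ER (s P + inc (\<tau> P)) (s Q + inc (\<tau> Q)) n =
   inc (chi P Q n + lb HQ (\<tau> P) (\<tau> Q) n + rho P (\<tau> Q) n - subst_mdl HQ (rho Q (\<tau> P)) n)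
   + s (lb LN P Q n)"
  by (simp add: lbE_addL lbE_addR chi_s lb_inc_s rho_d[symmetric] cdlin_add[OF inc_l]
      cdlin_diff[OF inc_l] algebra_simps)

lemma backward:
  assumes "nab_equiv LN HQ (tw_chi \<alpha> \<beta> chi, tw_rho \<alpha> \<beta> rho, tw_Phi \<alpha> \<beta> Phi) (chi, rho, Phi)"
  shows "inducible ER inc proj s \<alpha> \<beta>"
proof -
  obtain \<tau> where t_l: "cdlin LN HQ \<tau>"
    and R: "\<And>p h n. tw_rho \<alpha> \<beta> rho p h n - rho p h n = lb HQ (\<tau> p) h n"
    and C: "\<And>p q n. tw_chi \<alpha> \<beta> chi p q n - chi p q n =
            lb HQ (\<tau> p) (\<tau> q) n - \<tau> (lb LN p q n) + rho p (\<tau> q) n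
            - subst_mdl HQ (rho q (\<tau> p)) n"
    and P: "\<And>p. tw_Phi \<alpha> \<beta> Phi p - Phi p = nop HQ (\<tau> p) - \<tau> (nop LN p)"
    using assms unfolding nab_equiv_def by auto
  have R': "\<alpha> (rho p k n) = rho (\<beta> p) (\<alpha> k) n + lb HQ (\<tau> (\<beta> p)) (\<alpha> k) n" for p k n
    using R[of "\<beta> p" "\<alpha> k" n] by (simp add: tw_rho_def algebra_simps)
  have C': "\<alpha> (chi p q n) = chi (\<beta> p) (\<beta> q) n + lb HQ (\<tau> (\<beta> p)) (\<tau> (\<beta> q)) n
     - \<tau> (lb LN (\<beta> p) (\<beta> q) n) + rho (\<beta> p) (\<tau> (\<beta> q)) n
     - subst_mdl HQ (rho (\<beta> q) (\<tau> (\<beta> p))) n" for p q n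
    using C[of "\<beta> p" "\<beta> q" n] by (simp add: tw_chi_def algebra_simps)
  have P': "\<alpha> (Phi p) = Phi (\<beta> p) + nop HQ (\<tau> (\<beta> p)) - \<tau> (nop LN (\<beta> p))" for p
    using P[of "\<beta> p"] by (simp add: tw_Phi_def algebra_simps)
  define hp where "hp e = inv inc (e - s (proj e))" for e
  have hp_d: "inc (hp e) = e - s (proj e)" for e
    unfolding hp_def by (rule f_inv_into_f) (use kern in \<open>simp add: cdlin_diff[OF proj_l]\<close>)
  have dec: "e = s (proj e) + inc (hp e)" for e using hp_d[of e] by simp
  have hp_l: "cdlin ER HQ hp"
    unfolding cdlin_def
  proof (intro conjI allI)
    fix x y c
    show "hp (x + y) = hp x + hp y"
      by (rule inc_eqI) (simp add: hp_d cdlin_add[OF inc_l] cdlin_add[OF proj_l] cdlin_add[OF s_l])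
    show "hp (sc ER c x) = sc HQ c (hp x)"
      by (rule inc_eqI) (simp add: hp_d cdlin_sc[OF inc_l] cdlin_sc[OF proj_l] cdlin_sc[OF s_l]
          module_diff[OF modE])
    show "hp (dd ER x) = dd HQ (hp x)"
      by (rule inc_eqI) (simp add: hp_d cdlin_dd[OF inc_l] cdlin_dd[OF proj_l] cdlin_dd[OF s_l]
          ddE_diff)
  qed
  define G where "G p = s (\<beta> p) + inc (\<tau> (\<beta> p))" for p
  have G_l: "cdlin LN ER G"
    unfolding cdlin_def G_def
    by (simp add: cdlin_add[OF inc_l] cdlin_add[OF t_l] cdlin_add[OF s_l] cdlin_add[OF b_l]
          cdlin_sc[OF inc_l] cdlin_sc[OF t_l] cdlin_sc[OF s_l] cdlin_sc[OF b_l]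
          cdlin_dd[OF inc_l] cdlin_dd[OF t_l] cdlin_dd[OF s_l] cdlin_dd[OF b_l]
          algebra_simps modE[unfolded cdmodule_def] module.scale_right_distrib)
  define \<gamma> where "\<gamma> e = G (proj e) + inc (\<alpha> (hp e))" for e
  have g_l: "cdlin ER ER \<gamma>"
    unfolding cdlin_def \<gamma>_def
    by (simp add: cdlin_add[OF inc_l] cdlin_add[OF G_l] cdlin_add[OF proj_l] cdlin_add[OF a_l] cdlin_add[OF hp_l]
          cdlin_sc[OF inc_l] cdlin_sc[OF G_l] cdlin_sc[OF proj_l] cdlin_sc[OF a_l] cdlin_sc[OF hp_l]
          cdlin_dd[OF inc_l] cdlin_dd[OF G_l] cdlin_dd[OF proj_l] cdlin_dd[OF a_l] cdlin_dd[OF hp_l]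
          algebra_simps modE[unfolded cdmodule_def] module.scale_right_distrib)
  have hp_s: "hp (s p) = 0" for p
    by (rule inc_eqI) (simp add: hp_d cdlin_0[OF inc_l])
  have hp_i: "hp (inc h) = h" for h
    by (rule inc_eqI) (simp add: hp_d cdlin_0[OF s_l])
  have g_s: "\<gamma> (s p) = G p" for p
    by (simp add: \<gamma>_def hp_s cdlin_0[OF a_l] cdlin_0[OF inc_l])
  have g_i: "\<gamma> (inc h) = inc (\<alpha> h)" for h
    by (simp add: \<gamma>_def hp_i cdlin_0[OF G_l])
  have g_si: "\<gamma> (s p + inc h) = G p + inc (\<alpha> h)" for p h
    by (simp add: cdlin_add[OF g_l] g_s g_i)
  have proj_g: "proj (\<gamma> e) = \<beta> (proj e)" for e
    by (simp add: \<gamma>_def G_def cdlin_add[OF proj_l])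
  have b2: "lb ER (G p) (inc (\<alpha> k)) n = \<gamma> (lb ER (s p) (inc k) n)" for p k n
    by (simp add: G_def lbE_addL rho_d[symmetric] g_i R' cdlin_add[OF inc_l])
  have b4: "lb ER (inc (\<alpha> h)) (inc (\<alpha> k)) n = \<gamma> (lb ER (inc h) (inc k) n)" for h k n
    by (simp add: g_i a_lb)
  have b3: "lb ER (inc (\<alpha> h)) (G q) n = \<gamma> (lb ER (inc h) (s q) n)" for h q n
  proof -
    have "lb ER (inc (\<alpha> h)) (G q) n = - subst_mdl ER (lb ER (G q) (inc (\<alpha> h))) n"
      by (rule skewE)
    also have "\<dots> = - subst_mdl ER (\<lambda>m. inc (\<alpha> (rho q h m))) n"
    proof -
      have "lb ER (G q) (inc (\<alpha> h)) = (\<lambda>m. inc (\<alpha> (rho q h m)))"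
        by (rule HOL.ext) (simp add: b2 rho_d[symmetric] g_i)
      then show ?thesis by simp
    qed
    also have "\<dots> = - inc (\<alpha> (subst_mdl HQ (rho q h) n))"
      by (simp add: subst_mdl_map[OF inc_l inc_inj] subst_mdl_map[OF a_l a_inj])
    also have "\<dots> = \<gamma> (lb ER (inc h) (s q) n)"
      by (simp add: lb_inc_s cdlin_minus[OF g_l] g_i)
    finally show ?thesis .
  qed
  have b1: "lb ER (G p) (G q) n = \<gamma> (lb ER (s p) (s q) n)" for p q n
  proof -
    have "lb ER (G p) (G q) n =
      inc (chi (\<beta> p) (\<beta> q) n + lb HQ (\<tau> (\<beta> p)) (\<tau> (\<beta> q)) n + rho (\<beta> p) (\<tau> (\<beta> q)) n
        - subst_mdl HQ (rho (\<beta> q) (\<tau> (\<beta> p))) n) + s (lb LN (\<beta> p) (\<beta> q) n)"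
      unfolding G_def by (rule lb_sum)
    also have "\<dots> = inc (\<alpha> (chi p q n)) + G (lb LN p q n)"
      by (simp add: C' G_def b_lb cdlin_add[OF inc_l] cdlin_diff[OF inc_l] algebra_simps)
    also have "\<dots> = \<gamma> (lb ER (s p) (s q) n)"
      by (simp add: chi_s cdlin_add[OF g_l] g_s g_i add.commute)
    finally show ?thesis .
  qed
  have g_lb: "lb ER (\<gamma> a) (\<gamma> b) n = \<gamma> (lb ER a b n)" for a b n
  proof -
    have "lb ER (\<gamma> (s p + inc h)) (\<gamma> (s q + inc k)) n = \<gamma> (lb ER (s p + inc h) (s q + inc k) n)"
      for p h q k
      by (simp only: lbE_addL lbE_addR cdlin_add[OF g_l] g_s g_i b1 b2 b3 b4)
    then show ?thesis by (metis dec)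
  qed
  have g_nop: "\<gamma> (nop ER a) = nop ER (\<gamma> a)" for a
  proof -
    have "\<gamma> (nop ER (s p + inc h)) = nop ER (\<gamma> (s p + inc h))" for p h
      by (simp add: g_si cdlin_add[OF nopE_l] Phi_s inc_nop[symmetric] cdlin_add[OF g_l] g_i
          g_s G_def b_nop P' a_nop cdlin_add[OF inc_l] cdlin_diff[OF inc_l] algebra_simps)
    then show ?thesis by (metis dec)
  qed
  have g0: "x = 0" if "\<gamma> x = 0" for x
  proof -
    have "\<beta> (proj x) = \<beta> 0" using proj_g[of x] that cdlin_0[OF proj_l] cdlin_0[OF b_l] by simp
    then have px: "proj x = 0" using b_inj by (meson injD)
    then have "\<gamma> x = inc (\<alpha> (hp x))" by (simp add: \<gamma>_def cdlin_0[OF G_l])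
    then have "\<alpha> (hp x) = \<alpha> 0" using that cdlin_0[OF a_l] cdlin_0[OF inc_l] inc_eqI by metis
    then have "hp x = 0" using a_inj by (meson injD)
    then show ?thesis using dec[of x] px cdlin_0[OF s_l] cdlin_0[OF inc_l] by simp
  qed
  have g_inj: "inj \<gamma>"
  proof (rule injI)
    fix x y assume "\<gamma> x = \<gamma> y"
    then have "\<gamma> (x - y) = 0" by (simp add: cdlin_diff[OF g_l])
    then show "x = y" using g0 by fastforce
  qed
  have g_surj: "surj \<gamma>"
    unfolding surj_def
  proof
    fix y
    define p where "p = inv \<beta> (proj y)"
    have "proj (y - G p) = 0"
      by (simp add: p_def G_def cdlin_diff[OF proj_l] cdlin_add[OF proj_l])
    then obtain k where k: "y - G p = inc k" using kern by blast
    have "\<gamma> (s p + inc (inv \<alpha> k)) = y" using k by (simp add: g_si algebra_simps)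
    then show "\<exists>x. y = \<gamma> x" by metis
  qed
  have gA: "\<gamma> \<in> Aut ER"
    unfolding Aut_def morph_def using g_l g_lb g_nop g_inj g_surj by (simp add: bij_def)
  have "\<gamma> ` range inc = range inc"
  proof
    show "\<gamma> ` range inc \<subseteq> range inc" using g_i by auto
    show "range inc \<subseteq> \<gamma> ` range inc"
    proof
      fix x assume "x \<in> range inc"
      then obtain h where "x = inc h" by auto
      then have "x = \<gamma> (inc (inv \<alpha> h))" by (simp add: g_i)
      then show "x \<in> \<gamma> ` range inc" by auto
    qed
  qed
  then show ?thesis unfolding inducible_def using gA g_i proj_g ps by metis
qed

end

theorem theorem6p5:
  fixes HQ :: "'h::ab_group_add ncla" and ER :: "'e::ab_group_add ncla"
    and LN :: "'l::ab_group_add ncla"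
    and inc :: "'h \<Rightarrow> 'e" and proj :: "'e \<Rightarrow> 'l" and s :: "'l \<Rightarrow> 'e"
    and chi :: "'l \<Rightarrow> 'l \<Rightarrow> nat \<Rightarrow> 'h" and rho :: "'l \<Rightarrow> 'h \<Rightarrow> nat \<Rightarrow> 'h"
    and Phi :: "'l \<Rightarrow> 'h"
    and \<alpha> :: "'h \<Rightarrow> 'h" and \<beta> :: "'l \<Rightarrow> 'l"
  assumes "nab_ext HQ ER LN inc proj"
    and "is_section LN ER proj s"
    and "induced_cocycle LN ER inc s chi rho Phi"
    and "\<alpha> \<in> Aut HQ" and "\<beta> \<in> Aut LN"
  shows "inducible ER inc proj s \<alpha> \<beta> \<longleftrightarrow>
         nab_equiv LN HQ (tw_chi \<alpha> \<beta> chi, tw_rho \<alpha> \<beta> rho, tw_Phi \<alpha> \<beta> Phi) (chi, rho, Phi)"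
proof -
  interpret ctx HQ ER LN inc proj s chi rho Phi \<alpha> \<beta> using assms by (unfold_locales)
  show ?thesis using forward backward by blast
qed

end
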